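(* Let $X$ be a compact metric space and $f\colon X\to X$ a homeomorphism. Then the set $\mathcal{M}_{idis}(f)$ of Borel probability measures on $X$ that are inner-distal with respect to $f$ is a closed, convex subset of $\mathcal{M}(X)$ satisfying $f_*(\mathcal{M}_{idis}(f))\subseteq\mathcal{M}_{idis}(f)$.
   Context: $\mathcal{M}(X)$ is the set of Borel probability measures on $X$ with the weak* topology ($\mu_n\to\mu$ iff $\int\varphi\,d\mu_n\to\int\varphi\,d\mu$ for all continuous $\varphi\colon X\to\mathbb{R}$). $f_*\mu(E)=\mu(f^{-1}(E))$. The proximal cell of $x$ is $\mathcal{P}(x)=\{y\colon \inf_{n\in\mathbb{Z}} d(f^n(x),f^n(y))=0\}$, and $\mu$ is inner-distal w.r.t. $f$ if $\mu(\operatorname{Int}\mathcal{P}(x))=0$ for all $x\in X$. *)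

theory Defs
  imports "HOL-Analysis.Analysis" "HOL-Probability.Probability"
begin

definition zpow :: "('a \<Rightarrow> 'a) \<Rightarrow> int \<Rightarrow> 'a \<Rightarrow> 'a" where
  "zpow f n = (if 0 \<le> n then f ^^ nat n else inv f ^^ nat (- n))"

definition proximal_cell :: "('a::metric_space \<Rightarrow> 'a) \<Rightarrow> 'a \<Rightarrow> 'a set" where
  "proximal_cell f x = {y. (INF n::int. dist (zpow f n x) (zpow f n y)) = 0}"

definition inner_distal :: "('a::metric_space \<Rightarrow> 'a) \<Rightarrow> 'a measure \<Rightarrow> bool" where
  "inner_distal f \<mu> \<longleftrightarrow> (\<forall>x. emeasure \<mu> (interior (proximal_cell f x)) = 0)"

text \<open>M(X): Borel probability measures on X (X is the whole type).\<close>
definition prob_measures :: "'a::topological_space measure set" where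
  "prob_measures = {\<mu>. prob_space \<mu> \<and> sets \<mu> = sets borel}"

definition weak_star_topology :: "'a::topological_space measure topology" where
  "weak_star_topology = topology_generated_by
     {{\<mu> \<in> prob_measures. (\<integral>x. \<phi> x \<partial>\<mu>) \<in> U} | \<phi> U.
        continuous_on UNIV (\<phi> :: 'a \<Rightarrow> real) \<and> open U}"

definition mix_measure :: "real \<Rightarrow> 'a::topological_space measure \<Rightarrow> 'a measure \<Rightarrow> 'a measure" where
  "mix_measure t \<mu> \<nu> = measure_of UNIV (sets borel)
     (\<lambda>A. ennreal t * emeasure \<mu> A + ennreal (1 - t) * emeasure \<nu> A)"

definition inner_distal_measures :: "('a::metric_space \<Rightarrow> 'a) \<Rightarrow> 'a measure set" where
  "inner_distal_measures f = {\<mu> \<in> prob_measures. inner_distal f \<mu>}"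

end

theory Submission
  imports Defs
begin

lemma open_pos_fun:
  fixes U :: "'a::metric_space set"
  assumes "open U"
  shows "\<exists>\<phi>::'a\<Rightarrow>real. continuous_on UNIV \<phi> \<and> (\<forall>y. 0 \<le> \<phi> y) \<and> (\<forall>y. \<phi> y \<noteq> 0 \<longleftrightarrow> y \<in> U)"
proof (cases "U = UNIV")
  case True
  have "continuous_on UNIV (\<lambda>y::'a. 1::real)" by (rule continuous_on_const)
  then show ?thesis using True by (intro exI[where x="\<lambda>y::'a. 1::real"]) simp
next
  case False
  then have ne: "- U \<noteq> {}" by auto
  have cl: "closed (- U)" using assms by auto
  show ?thesis
  proof (intro exI[of _ "\<lambda>y. infdist y (- U)"] conjI allI)
    show "continuous_on UNIV (\<lambda>y. infdist y (- U))" by (intro continuous_intros)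
    fix y
    show "0 \<le> infdist y (- U)" by (rule infdist_nonneg)
    show "(infdist y (- U) \<noteq> 0) = (y \<in> U)"
      using in_closed_iff_infdist_zero[OF cl ne, of y] by auto
  qed
qed

lemma int_pos_iff:
  fixes \<phi> :: "'a::metric_space \<Rightarrow> real"
  assumes cpt: "compact (UNIV :: 'a set)" and nu: "\<nu> \<in> prob_measures"
    and c: "continuous_on UNIV \<phi>" and nn: "\<forall>y. 0 \<le> \<phi> y" and U: "\<forall>y. \<phi> y \<noteq> 0 \<longleftrightarrow> y \<in> U"
    and oU: "open U"
  shows "(\<integral>x. \<phi> x \<partial>\<nu>) > 0 \<longleftrightarrow> emeasure \<nu> U \<noteq> 0"
proof -
  interpret prob_space \<nu> using nu unfolding prob_measures_def by auto
  have sets: "sets \<nu> = sets borel" using nu unfolding prob_measures_def by auto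
  have sp: "space \<nu> = UNIV" using sets_eq_imp_space_eq[OF sets] by simp
  have meas: "\<phi> \<in> borel_measurable \<nu>"
    using borel_measurable_continuous_onI[OF c] measurable_cong_sets[OF sets refl, of borel] by metis
  have "bounded (range \<phi>)"
    using compact_imp_bounded[OF compact_continuous_image[OF c cpt]] .
  then obtain B where B: "\<And>y. norm (\<phi> y) \<le> B" unfolding bounded_iff by auto
  have int: "integrable \<nu> \<phi>"
    by (rule integrable_const_bound[where B=B]) (use B meas in auto)
  have ge: "(\<integral>x. \<phi> x \<partial>\<nu>) \<ge> 0" using nn by (intro integral_nonneg_AE) auto
  have "(\<integral>x. \<phi> x \<partial>\<nu>) = 0 \<longleftrightarrow> (AE x in \<nu>. \<phi> x = 0)"
    by (rule integral_nonneg_eq_0_iff_AE[OF int]) (use nn in auto)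
  also have "\<dots> \<longleftrightarrow> emeasure \<nu> U = 0"
    by (rule AE_iff_measurable) (use oU sets sp U in auto)
  finally show ?thesis using ge by auto
qed

lemma zpow_shift:
  assumes "bij f"
  shows "zpow f (n+1) y = zpow f n (f y)"
proof -
  have iv: "inv f (f z) = z" for z using assms by (simp add: bij_is_inj)
  show ?thesis
  proof (cases "0 \<le> n")
    case True
    then have "nat (n+1) = Suc (nat n)" by simp
    then show ?thesis using True unfolding zpow_def by (simp add: funpow_Suc_right del: funpow.simps)
  next
    case False
    show ?thesis
    proof (cases "n = -1")
      case True then show ?thesis unfolding zpow_def by (simp add: iv)
    next
      case False2: False
      then have "nat (-n) = Suc (nat (-(n+1)))" using False by simp
      then show ?thesis using False False2 unfolding zpow_def
        by (simp add: funpow_Suc_right iv del: funpow.simps)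
    qed
  qed
qed

lemma preimage_proximal:
  assumes "bij f"
  shows "f -` proximal_cell f x \<subseteq> proximal_cell f (inv f x)"
proof
  fix y assume "y \<in> f -` proximal_cell f x"
  then have h: "(INF n::int. dist (zpow f n x) (zpow f n (f y))) = 0"
    unfolding proximal_cell_def by simp
  have x: "x = f (inv f x)" using assms by (simp add: bij_is_surj surj_f_inv_f)
  let ?h = "\<lambda>n::int. dist (zpow f n (inv f x)) (zpow f n y)"
  have e1: "(\<lambda>n::int. dist (zpow f n x) (zpow f n (f y))) = (\<lambda>n. ?h (n+1))"
    by (subst x) (simp add: zpow_shift[OF assms])
  have e2: "range (\<lambda>n::int. ?h (n+1)) = range ?h"
  proof -
    have r1: "range (\<lambda>n::int. n+1) = UNIV" by (rule surjI[where f="\<lambda>n. n - 1"]) simp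
    have r2: "range (\<lambda>n::int. ?h (n+1)) = ?h ` range (\<lambda>n::int. n+1)" by (simp only: image_image)
    show ?thesis unfolding r2 r1 ..
  qed
  have "(INF n::int. ?h n) = 0" using h unfolding e1 e2 .
  then show "y \<in> proximal_cell f (inv f x)" unfolding proximal_cell_def by simp
qed

lemma mix_ok:
  fixes \<mu> \<nu> :: "'a::topological_space measure"
  assumes mu: "\<mu> \<in> prob_measures" and nu: "\<nu> \<in> prob_measures" and t: "0 \<le> t" "t \<le> 1"
  shows "mix_measure t \<mu> \<nu> \<in> prob_measures"
    and "\<And>A. A \<in> sets borel \<Longrightarrow> emeasure (mix_measure t \<mu> \<nu>) A = ennreal t * emeasure \<mu> A + ennreal (1 - t) * emeasure \<nu> A"
proof -
  have smu: "sets \<mu> = sets borel" and snu: "sets \<nu> = sets borel"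
    and pmu: "prob_space \<mu>" and pnu: "prob_space \<nu>"
    using mu nu unfolding prob_measures_def by auto
  let ?m = "\<lambda>A. ennreal t * emeasure \<mu> A + ennreal (1 - t) * emeasure \<nu> A"
  have sa: "sigma_algebra UNIV (sets borel)"
    using sets.sigma_algebra_axioms[of borel] by simp
  have pos: "positive (sets borel) ?m" unfolding positive_def by simp
  have ca: "countably_additive (sets borel) ?m"
    unfolding countably_additive_def
  proof (intro allI impI)
    fix A :: "nat \<Rightarrow> 'a set" assume A: "range A \<subseteq> sets borel" "disjoint_family A"
    have a1: "(\<Sum>i. emeasure \<mu> (A i)) = emeasure \<mu> (\<Union>i. A i)"
      by (rule suminf_emeasure) (use A smu in auto)
    have a2: "(\<Sum>i. emeasure \<nu> (A i)) = emeasure \<nu> (\<Union>i. A i)"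
      by (rule suminf_emeasure) (use A snu in auto)
    show "(\<Sum>i. ?m (A i)) = ?m (\<Union> (range A))"
      by (simp flip: suminf_add add: a1 a2)
  qed
  have em: "emeasure (mix_measure t \<mu> \<nu>) A = ?m A" if "A \<in> sets borel" for A
    unfolding mix_measure_def by (rule emeasure_measure_of_sigma[OF sa pos ca that])
  then show "\<And>A. A \<in> sets borel \<Longrightarrow> emeasure (mix_measure t \<mu> \<nu>) A = ?m A" .
  have ss: "sets (mix_measure t \<mu> \<nu>) = sets borel"
    unfolding mix_measure_def using sigma_algebra.sets_measure_of_eq[OF sa] .
  have sp: "space (mix_measure t \<mu> \<nu>) = UNIV"
    unfolding mix_measure_def using sigma_algebra.space_measure_of_eq[OF sa] .
  have "emeasure \<mu> UNIV = 1" using prob_space.emeasure_space_1[OF pmu] sets_eq_imp_space_eq[OF smu] by simp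
  moreover have "emeasure \<nu> UNIV = 1" using prob_space.emeasure_space_1[OF pnu] sets_eq_imp_space_eq[OF snu] by simp
  ultimately have "emeasure (mix_measure t \<mu> \<nu>) UNIV = ennreal t + ennreal (1 - t)"
    using em[of UNIV] by simp
  also have "\<dots> = 1" using t by (simp flip: ennreal_plus)
  finally have "prob_space (mix_measure t \<mu> \<nu>)" by (intro prob_spaceI) (simp add: sp)
  then show "mix_measure t \<mu> \<nu> \<in> prob_measures" unfolding prob_measures_def using ss by simp
qed

theorem lemma3p1:
  fixes f :: "'a::metric_space \<Rightarrow> 'a"
  assumes "compact (UNIV :: 'a set)"
    and "\<exists>g. homeomorphism UNIV UNIV f g"
  shows "closedin weak_star_topology (inner_distal_measures f)
    \<and> (\<forall>\<mu>\<in>inner_distal_measures f. \<forall>\<nu>\<in>inner_distal_measures f. \<forall>t::real.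
          0 \<le> t \<and> t \<le> 1 \<longrightarrow> mix_measure t \<mu> \<nu> \<in> inner_distal_measures f)
    \<and> (\<forall>\<mu>\<in>inner_distal_measures f. distr \<mu> borel f \<in> inner_distal_measures f)"
proof (intro conjI ballI allI impI)
  obtain g where hom: "homeomorphism UNIV UNIV f g" using assms(2) by blast
  have contf: "continuous_on UNIV f" using hom unfolding homeomorphism_def by auto
  have bij: "bij f"
    by (rule o_bij[where g=g]) (use hom in \<open>auto simp: homeomorphism_def fun_eq_iff\<close>)
  let ?C = "{{\<mu> \<in> prob_measures. (\<integral>x. \<phi> x \<partial>\<mu>) \<in> U} | \<phi> U.
        continuous_on UNIV (\<phi> :: 'a \<Rightarrow> real) \<and> open U}"
  have top: "topspace (weak_star_topology :: 'a measure topology) = prob_measures"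
  proof -
    have "prob_measures \<in> ?C"
      by (rule CollectI, rule exI[where x="\<lambda>_::'a. 0::real"], rule exI[where x=UNIV]) auto
    moreover have "S \<subseteq> prob_measures" if "S \<in> ?C" for S using that by auto
    ultimately have "\<Union>?C = prob_measures" by (intro equalityI Union_least Union_upper) auto
    then show ?thesis unfolding weak_star_topology_def by simp
  qed
  define \<phi> where "\<phi> x = (SOME \<phi>::'a\<Rightarrow>real. continuous_on UNIV \<phi> \<and> (\<forall>y. 0 \<le> \<phi> y) \<and>
      (\<forall>y. \<phi> y \<noteq> 0 \<longleftrightarrow> y \<in> interior (proximal_cell f x)))" for x
  have phi: "continuous_on UNIV (\<phi> x) \<and> (\<forall>y. 0 \<le> \<phi> x y) \<and>
      (\<forall>y. \<phi> x y \<noteq> 0 \<longleftrightarrow> y \<in> interior (proximal_cell f x))" for x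
    unfolding \<phi>_def by (rule someI_ex[OF open_pos_fun[OF open_interior[of "proximal_cell f x"]]])
  have eq: "prob_measures - inner_distal_measures f =
     (\<Union>x. {\<mu> \<in> prob_measures. (\<integral>y. \<phi> x y \<partial>\<mu>) \<in> {0<..}})"
  proof -
    have "(\<integral>y. \<phi> x y \<partial>\<mu>) > 0 \<longleftrightarrow> emeasure \<mu> (interior (proximal_cell f x)) \<noteq> 0"
      if "\<mu> \<in> prob_measures" for \<mu> x
      using int_pos_iff[OF assms(1) that, of "\<phi> x" "interior (proximal_cell f x)"] phi[of x] by auto
    then show ?thesis unfolding inner_distal_measures_def inner_distal_def by auto
  qed
  have "openin weak_star_topology (\<Union>x. {\<mu> \<in> prob_measures. (\<integral>y. \<phi> x y \<partial>\<mu>) \<in> {(0::real)<..}})"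
  proof (rule openin_Union, clarify)
    fix x
    have "{\<mu> \<in> prob_measures. (\<integral>y. \<phi> x y \<partial>\<mu>) \<in> {(0::real)<..}} \<in> ?C"
      by (rule CollectI, rule exI[where x="\<phi> x"], rule exI[where x="{(0::real)<..}"]) (use phi[of x] in simp)
    then show "openin weak_star_topology {\<mu> \<in> prob_measures. (\<integral>y. \<phi> x y \<partial>\<mu>) \<in> {(0::real)<..}}"
      unfolding weak_star_topology_def by (rule topology_generated_by_Basis)
  qed
  then show "closedin weak_star_topology (inner_distal_measures f)"
    unfolding closedin_def top eq[symmetric] by (auto simp: inner_distal_measures_def)
next
  fix \<mu> \<nu> and t :: real assume mu: "\<mu> \<in> inner_distal_measures f" and nu: "\<nu> \<in> inner_distal_measures f"
    and t: "0 \<le> t \<and> t \<le> 1"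
  have pm: "\<mu> \<in> prob_measures" "\<nu> \<in> prob_measures" using mu nu unfolding inner_distal_measures_def by auto
  have "emeasure (mix_measure t \<mu> \<nu>) (interior (proximal_cell f x)) = 0" for x
    using mix_ok(2)[OF pm t[THEN conjunct1] t[THEN conjunct2], of "interior (proximal_cell f x)"]
      mu nu unfolding inner_distal_measures_def inner_distal_def by simp
  then show "mix_measure t \<mu> \<nu> \<in> inner_distal_measures f"
    using mix_ok(1)[OF pm t[THEN conjunct1] t[THEN conjunct2]]
    unfolding inner_distal_measures_def inner_distal_def by simp
next
  fix \<mu> assume mu: "\<mu> \<in> inner_distal_measures f"
  obtain g where hom: "homeomorphism UNIV UNIV f g" using assms(2) by blast
  have contf: "continuous_on UNIV f" using hom unfolding homeomorphism_def by auto
  have bij: "bij f"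
    by (rule o_bij[where g=g]) (use hom in \<open>auto simp: homeomorphism_def fun_eq_iff\<close>)
  have smu: "sets \<mu> = sets borel" and pmu: "prob_space \<mu>"
    using mu unfolding inner_distal_measures_def prob_measures_def by auto
  have sp: "space \<mu> = UNIV" using sets_eq_imp_space_eq[OF smu] by simp
  have meas: "f \<in> measurable \<mu> borel"
    using borel_measurable_continuous_onI[OF contf] measurable_cong_sets[OF smu refl, of borel] by metis
  have "emeasure (distr \<mu> borel f) (interior (proximal_cell f x)) = 0" for x
  proof -
    have "emeasure (distr \<mu> borel f) (interior (proximal_cell f x))
        = emeasure \<mu> (f -` interior (proximal_cell f x))"
      using emeasure_distr[OF meas, of "interior (proximal_cell f x)"] sp by simp
    also have "\<dots> \<le> emeasure \<mu> (interior (proximal_cell f (inv f x)))"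
    proof (rule emeasure_mono)
      show "f -` interior (proximal_cell f x) \<subseteq> interior (proximal_cell f (inv f x))"
      proof (rule interior_maximal)
        show "f -` interior (proximal_cell f x) \<subseteq> proximal_cell f (inv f x)"
          using preimage_proximal[OF bij, of x] interior_subset by blast
        show "open (f -` interior (proximal_cell f x))"
          by (rule open_vimage[OF open_interior contf])
      qed
      show "interior (proximal_cell f (inv f x)) \<in> sets \<mu>" using smu by simp
    qed
    also have "\<dots> = 0" using mu unfolding inner_distal_measures_def inner_distal_def by simp
    finally show ?thesis by simp
  qed
  moreover have "prob_space (distr \<mu> borel f)" by (rule prob_space.prob_space_distr[OF pmu meas])
  ultimately show "distr \<mu> borel f \<in> inner_distal_measures f"
    unfolding inner_distal_measures_def inner_distal_def prob_measures_def by simp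
qed

end
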